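(* $[N,L_G]=-i\mathbf 1$ on $\mathrm D(NL_G)\cap\mathrm D(L_GN)$.
   Context: $\ell^2=\ell^2(\mathbb N)$, $\mathbb N=\{0,1,\dots\}$, basis $(\xi_n)$; $N\xi_n=n\xi_n$ (self-adjoint, maximal domain); $L$ left shift ($L\xi_n=\xi_{n-1}$, $L\xi_0=0$), $L^*$ right shift. $L_G$ is defined by $\mathrm D(L_G)=\{\varphi\in\ell^2:\lim_{K\to\infty}\sum_{k=1}^K\frac1k(L^{*k}-L^k)\varphi\text{ exists}\}$, $L_G\varphi=i\sum_{k=1}^\infty\frac1k(L^{*k}-L^k)\varphi$. Products of operators have their natural domains, and "$[A,B]=C$ on $\mathcal D$" means $(AB-BA)\varphi=C\varphi$ for $\varphi\in\mathcal D\subset\mathrm D(AB)\cap\mathrm D(BA)$. *)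

theory Defs
  imports "HOL-Analysis.Analysis"
begin

text \<open>Elements of l2(N) are represented as functions nat => complex that are
square-summable; operators are given by a domain set and an action.\<close>

definition l2 :: "(nat \<Rightarrow> complex) set" where
  "l2 = {f. summable (\<lambda>n. (cmod (f n))\<^sup>2)}"

definition l2norm :: "(nat \<Rightarrow> complex) \<Rightarrow> real" where
  "l2norm f = sqrt (\<Sum>n. (cmod (f n))\<^sup>2)"

definition domN :: "(nat \<Rightarrow> complex) set" where
  "domN = {f \<in> l2. (\<lambda>n. of_nat n * f n) \<in> l2}"

definition opN :: "(nat \<Rightarrow> complex) \<Rightarrow> (nat \<Rightarrow> complex)" where
  "opN f = (\<lambda>n. of_nat n * f n)"

text \<open>Left shift L (L xi_n = xi_{n-1}, L xi_0 = 0) and right shift L^*.\<close>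
definition shiftL :: "(nat \<Rightarrow> complex) \<Rightarrow> (nat \<Rightarrow> complex)" where
  "shiftL f = (\<lambda>n. f (Suc n))"

definition shiftR :: "(nat \<Rightarrow> complex) \<Rightarrow> (nat \<Rightarrow> complex)" where
  "shiftR f = (\<lambda>n. if n = 0 then 0 else f (n - 1))"

definition LG_partial :: "nat \<Rightarrow> (nat \<Rightarrow> complex) \<Rightarrow> (nat \<Rightarrow> complex)" where
  "LG_partial K f = (\<lambda>n. \<Sum>k=1..K. (1 / of_nat k) * ((shiftR ^^ k) f n - (shiftL ^^ k) f n))"

definition domLG :: "(nat \<Rightarrow> complex) set" where
  "domLG = {f \<in> l2. \<exists>g \<in> l2. (\<lambda>K. l2norm (LG_partial K f - g)) \<longlonglongrightarrow> 0}"

definition opLG :: "(nat \<Rightarrow> complex) \<Rightarrow> (nat \<Rightarrow> complex)" where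
  "opLG f = (\<lambda>n. \<i> * (THE g. g \<in> l2 \<and> (\<lambda>K. l2norm (LG_partial K f - g)) \<longlonglongrightarrow> 0) n)"

end

theory Submission
  imports Defs
begin

lemma l2_add:
  assumes "f \<in> l2" "g \<in> l2" shows "(\<lambda>n. f n + g n) \<in> l2"
proof -
  have "summable (\<lambda>n. 2 * (cmod (f n))\<^sup>2 + 2 * (cmod (g n))\<^sup>2)"
    using assms unfolding l2_def by (intro summable_add summable_mult) auto
  moreover have "norm ((cmod (f n + g n))\<^sup>2) \<le> 2 * (cmod (f n))\<^sup>2 + 2 * (cmod (g n))\<^sup>2" for n
  proof -
    have "cmod (f n + g n) \<le> cmod (f n) + cmod (g n)" by (rule norm_triangle_ineq)
    hence "(cmod (f n + g n))\<^sup>2 \<le> (cmod (f n) + cmod (g n))\<^sup>2"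
      by (intro power_mono) auto
    also have "\<dots> \<le> 2 * (cmod (f n))\<^sup>2 + 2 * (cmod (g n))\<^sup>2"
    proof -
      have "0 \<le> (cmod (f n) - cmod (g n))\<^sup>2" by simp
      thus ?thesis by (simp add: power2_sum power2_diff)
    qed
    finally show ?thesis by simp
  qed
  ultimately show ?thesis unfolding l2_def mem_Collect_eq
    by (rule summable_comparison_test'[where N=0])
qed

lemma l2_scale:
  assumes "f \<in> l2" shows "(\<lambda>n. c * f n) \<in> l2"
proof -
  have "summable (\<lambda>n. (cmod c)\<^sup>2 * (cmod (f n))\<^sup>2)"
    using assms unfolding l2_def by (intro summable_mult) auto
  thus ?thesis unfolding l2_def by (simp add: norm_mult power_mult_distrib)
qed

lemma l2_diff:
  assumes "f \<in> l2" "g \<in> l2" shows "(\<lambda>n. f n - g n) \<in> l2"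
  using l2_add[OF assms(1) l2_scale[OF assms(2), of "-1"]] by simp

lemma l2_diff': "f \<in> l2 \<Longrightarrow> g \<in> l2 \<Longrightarrow> f - g \<in> l2"
  using l2_diff[of f g] by (simp add: fun_diff_def)

lemma l2_shiftL: "f \<in> l2 \<Longrightarrow> shiftL f \<in> l2"
  unfolding l2_def shiftL_def using summable_Suc_iff[of "\<lambda>n. (cmod (f n))\<^sup>2"] by simp

lemma l2_shiftR: "f \<in> l2 \<Longrightarrow> shiftR f \<in> l2"
proof -
  assume "f \<in> l2"
  hence "summable (\<lambda>n. (cmod (shiftR f (Suc n)))\<^sup>2)" unfolding l2_def shiftR_def by simp
  thus ?thesis unfolding l2_def using summable_Suc_iff[of "\<lambda>n. (cmod (shiftR f n))\<^sup>2"] by simp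
qed

lemma l2_funpowL: "f \<in> l2 \<Longrightarrow> (shiftL ^^ k) f \<in> l2"
  by (induction k) (auto intro: l2_shiftL)

lemma l2_funpowR: "f \<in> l2 \<Longrightarrow> (shiftR ^^ k) f \<in> l2"
  by (induction k) (auto intro: l2_shiftR)

lemma l2_zero: "(\<lambda>n. 0) \<in> l2" unfolding l2_def by simp

lemma l2_sum: "finite A \<Longrightarrow> (\<And>k. k \<in> A \<Longrightarrow> F k \<in> l2) \<Longrightarrow> (\<lambda>n. \<Sum>k\<in>A. F k n) \<in> l2"
proof (induction A rule: finite_induct)
  case empty then show ?case using l2_zero by simp
next
  case (insert x A)
  then show ?case using l2_add[of "F x" "\<lambda>n. \<Sum>k\<in>A. F k n"] by simp
qed

lemma l2_LG_partial: "f \<in> l2 \<Longrightarrow> LG_partial K f \<in> l2"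
  unfolding LG_partial_def
  apply (rule l2_sum, simp)
  apply (rule l2_scale)
  apply (rule l2_diff)
  by (auto intro!: l2_funpowL l2_funpowR)

lemma l2_coord:
  assumes "h \<in> l2" shows "cmod (h n) \<le> l2norm h"
proof -
  have "(\<Sum>i\<in>{n}. (cmod (h i))\<^sup>2) \<le> (\<Sum>i. (cmod (h i))\<^sup>2)"
    using assms unfolding l2_def by (intro sum_le_suminf) auto
  hence "(cmod (h n))\<^sup>2 \<le> (\<Sum>i. (cmod (h i))\<^sup>2)" by simp
  hence "sqrt ((cmod (h n))\<^sup>2) \<le> l2norm h" unfolding l2norm_def by (rule real_sqrt_le_mono)
  thus ?thesis by simp
qed

lemma pointwise:
  assumes "\<And>K. F K \<in> l2" "g \<in> l2" "(\<lambda>K. l2norm (F K - g)) \<longlonglongrightarrow> 0"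
  shows "(\<lambda>K. F K n) \<longlonglongrightarrow> g n"
proof -
  have "((\<lambda>K. F K n - g n) \<longlongrightarrow> 0) sequentially"
  proof (rule Lim_null_comparison[OF _ assms(3)])
    show "\<forall>\<^sub>F K in sequentially. norm (F K n - g n) \<le> l2norm (F K - g)"
      using l2_coord[OF l2_diff'[OF assms(1) assms(2)], of _ n] by (simp add: always_eventually)
  qed
  thus ?thesis by (rule LIM_zero_cancel)
qed

lemma opLG_eq:
  assumes "f \<in> l2" "g \<in> l2" "(\<lambda>K. l2norm (LG_partial K f - g)) \<longlonglongrightarrow> 0"
  shows "opLG f = (\<lambda>n. \<i> * g n)"
proof -
  have "(THE g. g \<in> l2 \<and> (\<lambda>K. l2norm (LG_partial K f - g)) \<longlonglongrightarrow> 0) = g"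
  proof (rule the_equality)
    fix g' assume g': "g' \<in> l2 \<and> (\<lambda>K. l2norm (LG_partial K f - g')) \<longlonglongrightarrow> 0"
    show "g' = g"
    proof
      fix n
      have "(\<lambda>K. LG_partial K f n) \<longlonglongrightarrow> g' n"
        using g' by (intro pointwise l2_LG_partial assms) auto
      moreover have "(\<lambda>K. LG_partial K f n) \<longlonglongrightarrow> g n"
        using assms by (intro pointwise l2_LG_partial) auto
      ultimately show "g' n = g n" by (rule LIMSEQ_unique)
    qed
  qed (use assms in auto)
  thus ?thesis unfolding opLG_def by simp
qed

lemma powL: "(shiftL ^^ k) f = (\<lambda>n. f (n + k))"
  by (induction k) (auto simp: shiftL_def)

lemma powR: "(shiftR ^^ k) f = (\<lambda>n. if k \<le> n then f (n - k) else 0)"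
proof (induction k)
  case (Suc k)
  have "(shiftR ^^ Suc k) f = shiftR ((shiftR ^^ k) f)" by simp
  also have "\<dots> = shiftR (\<lambda>n. if k \<le> n then f (n - k) else 0)" using Suc by simp
  also have "\<dots> = (\<lambda>n. if Suc k \<le> n then f (n - Suc k) else 0)"
    unfolding shiftR_def by (rule ext) auto
  finally show ?case .
qed simp

definition Qs :: "(nat \<Rightarrow> complex) \<Rightarrow> nat \<Rightarrow> complex" where
  "Qs f n = (\<Sum>k=1..n. (1 / of_nat k) * f (n - k))"

definition Ts :: "(nat \<Rightarrow> complex) \<Rightarrow> nat \<Rightarrow> nat \<Rightarrow> complex" where
  "Ts f n K = (\<Sum>k=1..K. (1 / of_nat k) * f (n + k))"

lemma LG_partial_eq:
  assumes "n \<le> K" shows "LG_partial K f n = Qs f n - Ts f n K"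
proof -
  have "LG_partial K f n = (\<Sum>k=1..K. (1 / of_nat k) * (if k \<le> n then f (n - k) else 0)) - Ts f n K"
    unfolding LG_partial_def powL powR Ts_def
    by (simp add: sum_subtractf right_diff_distrib)
  also have "(\<Sum>k=1..K. (1 / of_nat k) * (if k \<le> n then f (n - k) else 0))
           = (\<Sum>k=1..n. (1 / of_nat k) * (if k \<le> n then f (n - k) else 0))"
    using assms by (intro sum.mono_neutral_right) auto
  also have "\<dots> = Qs f n" unfolding Qs_def by (intro sum.cong) auto
  finally show ?thesis .
qed

lemma tail_lim:
  assumes "f \<in> l2" "g \<in> l2" "(\<lambda>K. l2norm (LG_partial K f - g)) \<longlonglongrightarrow> 0"
  shows "Ts f n \<longlonglongrightarrow> Qs f n - g n"
proof -
  have "(\<lambda>K. LG_partial K f n) \<longlonglongrightarrow> g n"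
    using assms by (intro pointwise l2_LG_partial) auto
  hence "(\<lambda>K. Qs f n - LG_partial K f n) \<longlonglongrightarrow> Qs f n - g n"
    by (intro tendsto_intros)
  moreover have "\<forall>\<^sub>F K in sequentially. Qs f n - LG_partial K f n = Ts f n K"
    unfolding eventually_sequentially by (intro exI[of _ n]) (auto simp: LG_partial_eq)
  ultimately show ?thesis by (rule Lim_transform_eventually)
qed

lemma Qs_diff:
  "of_nat n * Qs \<phi> n - Qs (opN \<phi>) n = (\<Sum>m<n. \<phi> m)"
proof -
  have "of_nat n * Qs \<phi> n - Qs (opN \<phi>) n = (\<Sum>k=1..n. \<phi> (n - k))"
    unfolding Qs_def opN_def sum_distrib_left sum_subtractf[symmetric]
    by (intro sum.cong) (auto simp: of_nat_diff field_simps)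
  also have "\<dots> = (\<Sum>i<n. \<phi> (n - Suc i))" using sum.atLeast1_atMost_eq[of "\<lambda>k. \<phi> (n - k)" n] by simp
  also have "\<dots> = (\<Sum>m<n. \<phi> m)" by (rule sum.nat_diff_reindex)
  finally show ?thesis .
qed

lemma Ts_diff:
  "Ts (opN \<phi>) n K - of_nat n * Ts \<phi> n K = (\<Sum>k=1..K. \<phi> (n + k))"
  unfolding Ts_def opN_def sum_distrib_left sum_subtractf[symmetric]
  by (intro sum.cong) (auto simp: field_simps)

lemma partial_split:
  "(\<Sum>m<K + Suc n. \<phi> m) = (\<Sum>m<Suc n. \<phi> m) + (\<Sum>k=1..K. \<phi> (n + k))"
  by (induction K) (auto simp: add.commute add.left_commute)

theorem mainTheorem10:
  fixes \<phi> :: "nat \<Rightarrow> complex"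
  assumes "\<phi> \<in> domLG" and "opLG \<phi> \<in> domN"
      and "\<phi> \<in> domN" and "opN \<phi> \<in> domLG"
  shows "opN (opLG \<phi>) - opLG (opN \<phi>) = (\<lambda>n. - \<i> * \<phi> n)"
proof -
  obtain g where g: "g \<in> l2" "(\<lambda>K. l2norm (LG_partial K \<phi> - g)) \<longlonglongrightarrow> 0"
    using assms(1) unfolding domLG_def by auto
  obtain g' where g': "g' \<in> l2" "(\<lambda>K. l2norm (LG_partial K (opN \<phi>) - g')) \<longlonglongrightarrow> 0"
    using assms(4) unfolding domLG_def by auto
  have phi: "\<phi> \<in> l2" and Nphi: "opN \<phi> \<in> l2"
    using assms(1,4) unfolding domLG_def by auto
  have LG1: "opLG \<phi> = (\<lambda>n. \<i> * g n)" by (rule opLG_eq[OF phi g])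
  have LG2: "opLG (opN \<phi>) = (\<lambda>n. \<i> * g' n)" by (rule opLG_eq[OF Nphi g'])
  define B where "B n = of_nat n * g n - g' n" for n
  have "(\<lambda>n. of_nat n * (\<i> * g n)) \<in> l2"
    using assms(2) unfolding domN_def LG1 by auto
  hence "(\<lambda>n. (- \<i>) * (of_nat n * (\<i> * g n))) \<in> l2" by (rule l2_scale)
  hence "(\<lambda>n. of_nat n * g n) \<in> l2" by (simp add: algebra_simps)
  hence Bl2: "B \<in> l2" unfolding B_def using l2_diff g'(1) by blast
  have lim: "(\<lambda>N. \<Sum>m<N. \<phi> m) \<longlonglongrightarrow> B n + \<phi> n" for n
  proof -
    have "(\<lambda>K. Ts (opN \<phi>) n K - of_nat n * Ts \<phi> n K) \<longlonglongrightarrow>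
            (Qs (opN \<phi>) n - g' n) - of_nat n * (Qs \<phi> n - g n)"
      by (intro tendsto_intros tail_lim phi Nphi g g')
    hence L1: "(\<lambda>K. (\<Sum>m<Suc n. \<phi> m) + (Ts (opN \<phi>) n K - of_nat n * Ts \<phi> n K)) \<longlonglongrightarrow>
            (\<Sum>m<Suc n. \<phi> m) + ((Qs (opN \<phi>) n - g' n) - of_nat n * (Qs \<phi> n - g n))"
      by (rule tendsto_add[OF tendsto_const])
    have E: "(\<Sum>m<Suc n. \<phi> m) + ((Qs (opN \<phi>) n - g' n) - of_nat n * (Qs \<phi> n - g n))
        = B n + \<phi> n"
      using Qs_diff[of n \<phi>] unfolding B_def by (simp add: algebra_simps)
    have A: "(\<lambda>K. \<Sum>m<K + Suc n. \<phi> m) = (\<lambda>K. (\<Sum>m<Suc n. \<phi> m) + (Ts (opN \<phi>) n K - of_nat n * Ts \<phi> n K))"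
      by (rule ext) (simp only: Ts_diff partial_split)
    have "(\<lambda>K. \<Sum>m<K + Suc n. \<phi> m) \<longlonglongrightarrow> B n + \<phi> n"
      using L1 unfolding E A .
    thus ?thesis by (rule LIMSEQ_offset)
  qed
  define S where "S = B 0 + \<phi> 0"
  have BS: "B n + \<phi> n = S" for n
    using LIMSEQ_unique[OF lim[of n] lim[of 0]] unfolding S_def .
  have "(\<lambda>n. B n + \<phi> n) \<in> l2" using l2_add[OF Bl2 phi] .
  hence "summable (\<lambda>n::nat. (cmod S)\<^sup>2)" unfolding l2_def BS by simp
  hence "(\<lambda>n::nat. (cmod S)\<^sup>2) \<longlonglongrightarrow> 0" by (rule summable_LIMSEQ_zero)
  hence "(cmod S)\<^sup>2 = 0" using LIMSEQ_const_iff by blast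
  hence S0: "S = 0" by simp
  show ?thesis
  proof
    fix n
    have "B n = - \<phi> n" using BS[of n] S0 by (simp add: eq_neg_iff_add_eq_0)
    thus "(opN (opLG \<phi>) - opLG (opN \<phi>)) n = - \<i> * \<phi> n"
      unfolding fun_diff_def LG1 LG2 by (simp add: opN_def B_def algebra_simps flip: distrib_left)
  qed
qed

end
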